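(* Let $a$ be a smooth, positive, increasing function on $(0,\infty)$ and consider the two-dimensional Robertson–Walker spacetime $ds^2=-dt^2+a^2(t)\,d\chi^2$, $t>0$, $\chi\in\mathbb{R}$, with comoving worldlines $\beta_0:\chi=0$, $\beta_1:\chi=\chi_1$, $\beta_2:\chi=\chi_2$, where $0<\chi_1<\chi_2$. Suppose the events $p=\beta_0(t_0)$, $q=\beta_1(t_1)$, $s=\beta_2(t_2)$ lie on a single past-directed null geodesic from $p$ (so they are lightlike simultaneous with respect to $\beta_0$ at $t_0$). Let $v_{\mathrm{spec}1}$ be the spectroscopic velocity of $\beta_1$ (at $q$) relative to $\beta_0$ at proper time $t_0$, $v_{\mathrm{spec}2}$ the spectroscopic velocity of $\beta_2$ (at $s$) relative to $\beta_1$ at proper time $t_1$, and $v_{\mathrm{spec}3}$ the spectroscopic velocity of $\beta_2$ (at $s$) relative to $\beta_0$ at proper time $t_0$. Then $$v_{\mathrm{spec}3}=\frac{v_{\mathrm{spec}1}+v_{\mathrm{spec}2}}{1+v_{\mathrm{spec}1}v_{\mathrm{spec}2}}.$$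
   Context: Comoving worldlines $\chi=\text{const}$ are parametrized by $t$, their proper time. For a comoving observer $\beta_j$ ($\chi=\chi_j$) at proper time $T$ and a comoving particle with coordinate $\chi$, let $(t,\chi)$ be the event of the particle on the past light cone of $(T,\chi_j)$, i.e. $\int_t^T du/a(u)=|\chi-\chi_j|$. The spectroscopic velocity of the particle relative to $\beta_j$ at proper time $T$ is defined by parallel transporting the particle's 4-velocity along the null geodesic from $(t,\chi)$ to $(T,\chi_j)$ and writing the result as $\gamma(u+V)$ with $u=\partial_t$, $V\perp u$; then $V=v_{\mathrm{spec}}\,a(T)^{-1}\partial_\chi$. It is known that $v_{\mathrm{spec}}=\mathrm{sgn}(\chi-\chi_j)\dfrac{a^2(T)-a^2(t)}{a^2(T)+a^2(t)}$. *)

theory Defs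
  imports "HOL-Analysis.Analysis"
begin

definition smooth_on :: "real set \<Rightarrow> (real \<Rightarrow> real) \<Rightarrow> bool" where
  "smooth_on S f \<longleftrightarrow> (\<forall>n. \<forall>x\<in>S. ((deriv ^^ n) f) differentiable (at x))"

text \<open>The event (t, chi) lies on the past light cone of (T, chij) in the 2D
  Robertson-Walker spacetime with scale factor a: the integral of du/a(u) from t to T
  equals |chi - chij|.\<close>
definition on_past_lightcone ::
  "(real \<Rightarrow> real) \<Rightarrow> real \<Rightarrow> real \<Rightarrow> real \<Rightarrow> real \<Rightarrow> bool" where
  "on_past_lightcone a T chij t chi \<longleftrightarrow>
     0 < t \<and> t \<le> T \<and> integral {t..T} (\<lambda>u. 1 / a u) = \<bar>chi - chij\<bar>"

text \<open>Spectroscopic velocity of the comoving particle chi relative to the comoving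
  observer chij at proper time T (formula from the context), where t is the time of the
  particle's event on the past light cone of (T, chij).\<close>
definition v_spec :: "(real \<Rightarrow> real) \<Rightarrow> real \<Rightarrow> real \<Rightarrow> real \<Rightarrow> real" where
  "v_spec a T chij chi =
     (let t = (THE t. on_past_lightcone a T chij t chi)
      in sgn (chi - chij) * ((a T)\<^sup>2 - (a t)\<^sup>2) / ((a T)\<^sup>2 + (a t)\<^sup>2))"

end

theory Submission
  imports Defs
begin

lemma cont_a:
  assumes smooth: "smooth_on {0<..} a" and pos: "\<forall>t>0. a t > (0::real)"
    and x: "0 < x"
  shows "(\<lambda>u. 1 / a u) integrable_on {x..y}"
proof -
  have "continuous_on {x..y} a"
  proof (rule continuous_at_imp_continuous_on, intro ballI)
    fix u assume "u \<in> {x..y}"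
    then have "u > 0" using x by auto
    then have "a differentiable (at u)" using smooth unfolding smooth_on_def
      by (metis funpow_0 greaterThan_iff)
    then show "isCont a u" by (rule differentiable_imp_continuous_within)
  qed
  moreover have "\<forall>u\<in>{x..y}. a u \<noteq> 0"
  proof
    fix u assume "u \<in> {x..y}" then have "u > 0" using x by auto
    then show "a u \<noteq> 0" using pos by (metis less_irrefl)
  qed
  ultimately have "continuous_on {x..y} (\<lambda>u. 1 / a u)"
    by (intro continuous_intros) auto
  then show ?thesis by (rule integrable_continuous_interval)
qed

lemma split_int:
  assumes smooth: "smooth_on {0<..} a" and pos: "\<forall>t>0. a t > (0::real)"
    and "0 < x" "x \<le> y" "y \<le> T"
  shows "integral {x..T} (\<lambda>u. 1 / a u) = integral {x..y} (\<lambda>u. 1 / a u) + integral {y..T} (\<lambda>u. 1 / a u)"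
  using Henstock_Kurzweil_Integration.integral_combine[OF assms(4,5) cont_a[OF smooth pos assms(3), of T]] by simp

lemma pos_int:
  assumes smooth: "smooth_on {0<..} a" and pos: "\<forall>t>0. a t > (0::real)"
    and incr: "mono_on {0<..} a"
    and "0 < x" "x < y"
  shows "integral {x..y} (\<lambda>u. 1 / a u) > 0"
proof -
  have "integral {x..y} (\<lambda>u. 1 / a y) \<le> integral {x..y} (\<lambda>u. 1 / a u)"
  proof (rule integral_le)
    show "(\<lambda>u. 1 / a u) integrable_on {x..y}" by (rule cont_a[OF smooth pos assms(4)])
    fix u assume u: "u \<in> {x..y}"
    then have "a u \<le> a y" using incr assms(4,5) by (auto intro: mono_onD)
    moreover have "a u > 0" using u pos assms(4) by auto
    ultimately show "1 / a y \<le> 1 / a u" by (simp add: frac_le)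
  qed auto
  moreover have "integral {x..y} (\<lambda>u. 1 / a y) = (y - x) / a y" using assms(5) by simp
  moreover have "(y - x) / a y > 0" using assms pos by auto
  ultimately show ?thesis by linarith
qed

lemma strict:
  assumes smooth: "smooth_on {0<..} a" and pos: "\<forall>t>0. a t > (0::real)"
    and incr: "mono_on {0<..} a"
    and "0 < x" "x < y" "y \<le> T"
  shows "integral {x..T} (\<lambda>u. 1 / a u) > integral {y..T} (\<lambda>u. 1 / a u)"
  using split_int[OF smooth pos assms(4) _ assms(6)] pos_int[OF smooth pos incr assms(4,5)] assms(5)
  by simp

lemma the_eq:
  assumes smooth: "smooth_on {0<..} a" and pos: "\<forall>t>0. a t > (0::real)"
    and incr: "mono_on {0<..} a"
    and h: "on_past_lightcone a T c t x"
  shows "(THE t. on_past_lightcone a T c t x) = t"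
proof (rule the_equality)
  show "on_past_lightcone a T c t x" by fact
  fix t' assume h': "on_past_lightcone a T c t' x"
  show "t' = t"
  proof (rule ccontr)
    assume "t' \<noteq> t"
    then consider "t' < t" | "t < t'" by linarith
    then show False
    proof cases
      case 1 then show ?thesis using strict[OF smooth pos incr, of t' t T] h h'
        unfolding on_past_lightcone_def by auto
    next
      case 2 then show ?thesis using strict[OF smooth pos incr, of t t' T] h h'
        unfolding on_past_lightcone_def by auto
    qed
  qed
qed

lemma alg:
  fixes A B C :: real
  assumes "A > 0" "B > 0" "C > 0"
  shows "(A - C) / (A + C) = ((A - B)/(A + B) + (B - C)/(B + C)) / (1 + (A - B)/(A + B) * ((B - C)/(B + C)))"
proof -
  have d: "A + B > 0" "B + C > 0" "A + C > 0" using assms by auto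
  have "1 + (A - B)/(A + B) * ((B - C)/(B + C)) = 2*B*(A+C) / ((A+B)*(B+C))"
    using d by (simp add: divide_simps) (simp add: algebra_simps)
  moreover have "(A - B)/(A + B) + (B - C)/(B + C) = 2*B*(A-C) / ((A+B)*(B+C))"
    using d by (simp add: divide_simps) (simp add: algebra_simps)
  ultimately show ?thesis using d assms by (simp add: divide_simps)
qed

theorem theorem2:
  fixes a :: "real \<Rightarrow> real" and chi1 chi2 t0 t1 t2 :: real
  assumes smooth: "smooth_on {0<..} a"
    and pos: "\<forall>t>0. a t > 0"
    and incr: "mono_on {0<..} a"
    and chi: "0 < chi1" "chi1 < chi2"
    and t0: "0 < t0"
    and q: "on_past_lightcone a t0 0 t1 chi1"
    and s: "on_past_lightcone a t0 0 t2 chi2"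
  shows "v_spec a t0 0 chi2 =
           (v_spec a t0 0 chi1 + v_spec a t1 chi1 chi2)
           / (1 + v_spec a t0 0 chi1 * v_spec a t1 chi1 chi2)"
proof -
  note qq = q[unfolded on_past_lightcone_def]
  note ss = s[unfolded on_past_lightcone_def]
  have q1: "0 < t1" "t1 \<le> t0" using qq by (rule conjunct1, meson conjunct1 conjunct2)
  have s1: "0 < t2" "t2 \<le> t0" using ss by (rule conjunct1, meson conjunct1 conjunct2)
  have qi: "integral {t1..t0} (\<lambda>u. 1 / a u) = chi1"
    using qq chi(1) abs_of_pos[of chi1] by (metis diff_zero)
  have si: "integral {t2..t0} (\<lambda>u. 1 / a u) = chi2"
    using ss chi abs_of_pos[of chi2] by (metis diff_zero order.strict_trans)
  have t2t1: "t2 < t1"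
  proof (rule ccontr)
    assume "\<not> t2 < t1"
    then have "t1 \<le> t2" by linarith
    have "integral {t1..t0} (\<lambda>u. 1 / a u) \<ge> integral {t2..t0} (\<lambda>u. 1 / a u)"
    proof (cases "t1 = t2")
      case False
      then have "t1 < t2" using \<open>t1 \<le> t2\<close> by linarith
      then have "integral {t2..t0} (\<lambda>u. 1 / a u) < integral {t1..t0} (\<lambda>u. 1 / a u)"
        using strict[OF smooth pos incr q1(1) _ s1(2)] by blast
      then show ?thesis by (rule less_imp_le)
    qed simp
    then show False using qi si chi by linarith
  qed
  have "integral {t2..t0} (\<lambda>u. 1 / a u) = integral {t2..t1} (\<lambda>u. 1 / a u) + integral {t1..t0} (\<lambda>u. 1 / a u)"
    using split_int[OF smooth pos s1(1) _ q1(2)] t2t1 by linarith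
  then have "integral {t2..t1} (\<lambda>u. 1 / a u) = \<bar>chi2 - chi1\<bar>"
    using qi si chi by linarith
  then have r: "on_past_lightcone a t1 chi1 t2 chi2"
    unfolding on_past_lightcone_def using s1 t2t1 by linarith
  have sg1: "sgn (chi1 - 0) = (1::real)" "sgn (chi2 - 0) = (1::real)" "sgn (chi2 - chi1) = (1::real)"
    using chi by auto
  have e1: "v_spec a t0 0 chi1 = ((a t0)\<^sup>2 - (a t1)\<^sup>2) / ((a t0)\<^sup>2 + (a t1)\<^sup>2)"
    unfolding v_spec_def Let_def the_eq[OF smooth pos incr q] sg1 by (rule arg_cong2[where f="(/)"]) simp_all
  have e2: "v_spec a t0 0 chi2 = ((a t0)\<^sup>2 - (a t2)\<^sup>2) / ((a t0)\<^sup>2 + (a t2)\<^sup>2)"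
    unfolding v_spec_def Let_def the_eq[OF smooth pos incr s] sg1 by (rule arg_cong2[where f="(/)"]) simp_all
  have e3: "v_spec a t1 chi1 chi2 = ((a t1)\<^sup>2 - (a t2)\<^sup>2) / ((a t1)\<^sup>2 + (a t2)\<^sup>2)"
    unfolding v_spec_def Let_def the_eq[OF smooth pos incr r] sg1 by (rule arg_cong2[where f="(/)"]) simp_all
  have "a t0 > 0" "a t1 > 0" "a t2 > 0" using pos t0 q1(1) s1(1) by blast+
  then have p: "(a t0)\<^sup>2 > 0" "(a t1)\<^sup>2 > 0" "(a t2)\<^sup>2 > 0" by simp_all
  show ?thesis unfolding e1 e2 e3 by (rule alg[OF p])
qed

end
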